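(* Consider day-ahead prices $\boldsymbol{P}=(P_0,\dots,P_H)$ with $H\ge 2$, a storage of capacity $\kappa>0$ and efficiency $\eta\in(0,1]$, and the admissible bid vectors consisting of the zero vector and the vectors $\vec a(b,s)\in\mathbb{R}^{H+1}$ for hours $b<s$, with $a_b=\kappa/\eta$, $a_s=-\eta\kappa$ and $a_h=0$ otherwise. For a predictive distribution $\mathcal{F}$ of the prices, let $\boldsymbol F\sim\mathcal F$ and let $\mathcal{P}^{\vec a}_{\mathcal F}$ denote the distribution of the forecasted revenue $-\vec a^{\top}\boldsymbol F$. Let $\rho$ be any risk measure that depends on a revenue only through its distribution, and let the battery trading strategy choose $\vec a^*_{\mathcal F}\in\arg\max_{\vec a}\rho(\mathcal{P}^{\vec a}_{\mathcal F})$ (with a fixed tie-breaking rule), with realized revenue $-(\vec a^*_{\mathcal F})^{\top}\vec p$ for realized prices $\vec p$. Then there exist a true distribution $\mathcal F_1$ and a different forecast distribution $\mathcal F_2\neq\mathcal F_1$ such that $\rho(\mathcal{P}^{\vec a}_{\mathcal F_1})=\rho(\mathcal{P}^{\vec a}_{\mathcal F_2})$ for all admissible $\vec a$, so that the ranking of all bid pairs $(b,s)$ and the chosen optimal bid coincide. In particular, the score $S(\mathcal F,\vec p)=(\vec a^*_{\mathcal F})^{\top}\vec p$ (negative realized revenue) is not a strictly proper scoring rule.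
   Context: A scoring rule $S(\mathcal F,x)$ (lower is better) is proper if $\mathbb{E}_{x\sim\mathcal D}[S(\mathcal D,x)]\le\mathbb{E}_{x\sim\mathcal D}[S(\mathcal F,x)]$ for all forecasts $\mathcal F$ and true distributions $\mathcal D$, and strictly proper if equality holds only for $\mathcal F=\mathcal D$. *)

theory Defs
  imports "HOL-Probability.Probability"
begin

definition price_space :: "nat \<Rightarrow> (nat \<Rightarrow> real) measure" where
  "price_space H = PiM {..H} (\<lambda>_. (borel :: real measure))"

definition price_dists :: "nat \<Rightarrow> (nat \<Rightarrow> real) measure set" where
  "price_dists H = {F. prob_space F \<and> sets F = sets (price_space H)}"

definition bid_vec :: "real \<Rightarrow> real \<Rightarrow> nat \<Rightarrow> nat \<Rightarrow> (nat \<Rightarrow> real)" where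
  "bid_vec \<kappa> \<eta> b s = (\<lambda>h. if h = b then \<kappa> / \<eta> else if h = s then - (\<eta> * \<kappa>) else 0)"

definition admissible :: "nat \<Rightarrow> real \<Rightarrow> real \<Rightarrow> (nat \<Rightarrow> real) \<Rightarrow> bool" where
  "admissible H \<kappa> \<eta> a \<longleftrightarrow>
     a = (\<lambda>_. 0) \<or> (\<exists>b s. b < s \<and> s \<le> H \<and> a = bid_vec \<kappa> \<eta> b s)"

definition bid_dot :: "nat \<Rightarrow> (nat \<Rightarrow> real) \<Rightarrow> (nat \<Rightarrow> real) \<Rightarrow> real" where
  "bid_dot H a p = (\<Sum>h\<le>H. a h * p h)"

definition revenue_dist :: "nat \<Rightarrow> (nat \<Rightarrow> real) measure \<Rightarrow> (nat \<Rightarrow> real) \<Rightarrow> real measure" where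
  "revenue_dist H \<F> a = distr \<F> borel (\<lambda>p. - bid_dot H a p)"

text \<open>Optimal bid chosen by the strategy: a fixed selection rule sel (tie-breaking)
  applied to the map a |-> rho(P^a_F).\<close>
definition opt_bid ::
  "nat \<Rightarrow> (real measure \<Rightarrow> real) \<Rightarrow> (((nat \<Rightarrow> real) \<Rightarrow> real) \<Rightarrow> (nat \<Rightarrow> real))
     \<Rightarrow> (nat \<Rightarrow> real) measure \<Rightarrow> (nat \<Rightarrow> real)" where
  "opt_bid H \<rho> sel \<F> = sel (\<lambda>a. \<rho> (revenue_dist H \<F> a))"

text \<open>Score S(F,p) = (a*_F)^T p  (negative realized revenue; lower is better).\<close>
definition battery_score ::
  "nat \<Rightarrow> (real measure \<Rightarrow> real) \<Rightarrow> (((nat \<Rightarrow> real) \<Rightarrow> real) \<Rightarrow> (nat \<Rightarrow> real))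
     \<Rightarrow> (nat \<Rightarrow> real) measure \<Rightarrow> (nat \<Rightarrow> real) \<Rightarrow> real" where
  "battery_score H \<rho> sel \<F> p = bid_dot H (opt_bid H \<rho> sel \<F>) p"

definition proper_on :: "'a measure set \<Rightarrow> ('a measure \<Rightarrow> 'a \<Rightarrow> real) \<Rightarrow> bool" where
  "proper_on C S \<longleftrightarrow> (\<forall>D\<in>C. \<forall>F\<in>C. (\<integral>x. S D x \<partial>D) \<le> (\<integral>x. S F x \<partial>D))"

definition strictly_proper_on :: "'a measure set \<Rightarrow> ('a measure \<Rightarrow> 'a \<Rightarrow> real) \<Rightarrow> bool" where
  "strictly_proper_on C S \<longleftrightarrow> proper_on C S \<and>
     (\<forall>D\<in>C. \<forall>F\<in>C. (\<integral>x. S D x \<partial>D) = (\<integral>x. S F x \<partial>D) \<longrightarrow> F = D)"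

end

theory Submission imports Defs begin

definition vv :: "nat \<Rightarrow> bool \<Rightarrow> bool \<times> bool \<Rightarrow> nat \<Rightarrow> real" where
  "vv H c i = (\<lambda>h. if h \<le> H then (if h = 0 then of_bool (fst i) else if h = 1 then of_bool (snd i)
     else if h = 2 then of_bool (if c then fst i \<noteq> snd i else fst i = snd i)
     else 0) else undefined)"

definition ww :: "nat \<Rightarrow> (bool \<times> bool) \<times> bool \<Rightarrow> nat \<Rightarrow> real" where
  "ww H z = vv H (snd z) (fst z)"

definition QQ :: "nat \<Rightarrow> ((bool \<times> bool) \<times> bool) pmf" where
  "QQ n = pair_pmf (pmf_of_set UNIV) (bernoulli_pmf (1 / (real n + 2)))"

definition FF :: "nat \<Rightarrow> nat \<Rightarrow> (nat \<Rightarrow> real) measure" where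
  "FF H n = distr (measure_pmf (QQ n)) (price_space H) (ww H)"

lemma ww_meas: "ww H \<in> measurable (measure_pmf (QQ n)) (price_space H)"
proof -
  have "ww H z \<in> space (price_space H)" for z
    unfolding price_space_def space_PiM PiE_iff extensional_def ww_def vv_def by simp
  then show ?thesis by simp
qed

lemma FF_dist: "FF H n \<in> price_dists H"
  unfolding price_dists_def FF_def
  by (auto intro!: measure_pmf.prob_space_distr ww_meas)

lemma bid_dot_meas: "(\<lambda>p. - bid_dot H a p) \<in> borel_measurable (price_space H)"
  unfolding bid_dot_def price_space_def by measurable

lemma prod_meas: "(\<lambda>p. p 0 * p 1 * p (2::nat)) \<in> borel_measurable (price_space H)"
  if "H \<ge> 2" unfolding price_space_def using that
  by (intro borel_measurable_times measurable_component_singleton) auto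

lemma bid_dot_bid: "b < s \<Longrightarrow> s \<le> H \<Longrightarrow>
   bid_dot H (bid_vec \<kappa> \<eta> b s) p = \<kappa> / \<eta> * p b - \<eta> * \<kappa> * p s"
proof -
  assume "b < s" "s \<le> H"
  have "bid_dot H (bid_vec \<kappa> \<eta> b s) p = (\<Sum>h\<le>H. (if h = b then \<kappa> / \<eta> * p b else 0) + (if h = s then - (\<eta> * \<kappa>) * p s else 0))"
    unfolding bid_dot_def bid_vec_def using \<open>b < s\<close> by (intro sum.cong) auto
  also have "\<dots> = \<kappa> / \<eta> * p b - \<eta> * \<kappa> * p s"
    using \<open>b < s\<close> \<open>s \<le> H\<close> by (simp add: sum.distrib)
  finally show ?thesis .
qed

definition sig :: "nat \<Rightarrow> nat \<Rightarrow> bool \<times> bool \<Rightarrow> bool \<times> bool" where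
  "sig b s i = (if b = 0 \<and> s = 2 then (fst i, \<not> snd i)
     else if b = 2 \<or> s = 2 then (\<not> fst i, snd i) else i)"

lemma sig_inv: "sig b s (sig b s i) = i"
  by (cases i) (auto simp: sig_def)

lemma sig_coord: "b < s \<Longrightarrow> s \<le> H \<Longrightarrow> h \<in> {b, s} \<Longrightarrow>
  vv H True i h = vv H False (sig b s i) h"
proof -
  assume a: "b < s" "s \<le> H" "h \<in> {b, s}"
  obtain x y where i: "i = (x, y)" by (cases i)
  have hH: "h \<le> H" using a by auto
  show ?thesis
  proof (cases "b = 0 \<and> s = 2")
    case True
    then show ?thesis using a hH by (auto simp: sig_def vv_def i)
  next
    case F1: False
    show ?thesis
    proof (cases "b = 2 \<or> s = 2")
      case True
      then have "h \<noteq> 0" using a F1 by auto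
      then show ?thesis using a hH F1 True by (auto simp: sig_def vv_def i)
    next
      case False
      then have "h \<noteq> 2" using a by auto
      then show ?thesis using hH F1 False by (simp add: sig_def vv_def i)
    qed
  qed
qed

lemma perm_exists:
  assumes "admissible H \<kappa> \<eta> a"
  shows "\<exists>\<sigma>. (\<forall>i. \<sigma> (\<sigma> i) = i) \<and>
     (\<forall>i. bid_dot H a (vv H True i) = bid_dot H a (vv H False (\<sigma> i)))"
proof (cases "a = (\<lambda>_. 0)")
  case True
  then show ?thesis by (intro exI[of _ id]) (simp add: bid_dot_def)
next
  case False
  then obtain b s where bs: "b < s" "s \<le> H" "a = bid_vec \<kappa> \<eta> b s"
    using assms unfolding admissible_def by blast
  show ?thesis
  proof (intro exI[of _ "sig b s"] conjI allI)
    fix i show "sig b s (sig b s i) = i" by (rule sig_inv)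
    show "bid_dot H a (vv H True i) = bid_dot H a (vv H False (sig b s i))"
      using bs sig_coord[of b s H _ i] by (simp add: bid_dot_bid)
  qed
qed

lemma QQ_inv:
  assumes "\<And>i. \<sigma> (\<sigma> i) = i"
  defines "\<psi> \<equiv> (\<lambda>z. (if snd z then \<sigma> (fst z) else fst z, snd z))"
  shows "map_pmf \<psi> (QQ n) = QQ n"
proof (rule pmf_eqI)
  fix z
  have inv: "\<psi> (\<psi> z) = z" for z using assms by (cases z) auto
  then have "inj \<psi>" by (metis injI)
  have "pmf (map_pmf \<psi> (QQ n)) z = pmf (map_pmf \<psi> (QQ n)) (\<psi> (\<psi> z))" by (simp add: inv)
  also have "\<dots> = pmf (QQ n) (\<psi> z)" by (rule pmf_map_inj'[OF \<open>inj \<psi>\<close>])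
  also have "\<dots> = pmf (QQ n) z"
    by (cases z) (simp add: QQ_def pmf_pair \<psi>_def)
  finally show "pmf (map_pmf \<psi> (QQ n)) z = pmf (QQ n) z" .
qed

lemma rev_eq:
  assumes "admissible H \<kappa> \<eta> a"
  shows "revenue_dist H (FF H n) a =
    distr (measure_pmf (pmf_of_set UNIV)) borel (\<lambda>i. - bid_dot H a (vv H False i))"
proof -
  obtain \<sigma> where s1: "\<And>i. \<sigma> (\<sigma> i) = i"
    and s2: "\<And>i. bid_dot H a (vv H True i) = bid_dot H a (vv H False (\<sigma> i))"
    using perm_exists[OF assms] by blast
  define \<psi> where "\<psi> = (\<lambda>z::(bool\<times>bool)\<times>bool. (if snd z then \<sigma> (fst z) else fst z, snd z))"
  define G where "G = (\<lambda>i. - bid_dot H a (vv H False i))"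
  have eq: "(\<lambda>p. - bid_dot H a p) \<circ> ww H = (\<lambda>z. G (fst z)) \<circ> \<psi>"
    by (rule ext) (auto simp: ww_def G_def \<psi>_def s2)
  have "revenue_dist H (FF H n) a = distr (QQ n) borel ((\<lambda>p. - bid_dot H a p) \<circ> ww H)"
    unfolding revenue_dist_def FF_def
    by (rule distr_distr[OF bid_dot_meas ww_meas])
  also have "\<dots> = distr (QQ n) borel ((\<lambda>z. G (fst z)) \<circ> \<psi>)" by (simp add: eq)
  also have "\<dots> = distr (distr (QQ n) (count_space UNIV) \<psi>) borel (\<lambda>z. G (fst z))"
    by (rule distr_distr[symmetric]) auto
  also have "\<dots> = distr (map_pmf \<psi> (QQ n)) borel (\<lambda>z. G (fst z))"
    by (simp add: map_pmf_rep_eq)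
  also have "\<dots> = distr (QQ n) borel (G \<circ> fst)"
    using QQ_inv[of \<sigma> n] s1 unfolding \<psi>_def by (simp add: comp_def)
  also have "\<dots> = distr (distr (QQ n) (count_space UNIV) fst) borel G"
    by (rule distr_distr[symmetric]) auto
  also have "\<dots> = distr (map_pmf fst (QQ n)) borel G"
    by (simp add: map_pmf_rep_eq)
  also have "\<dots> = distr (pmf_of_set UNIV) borel G"
    by (simp add: QQ_def map_fst_pair_pmf)
  finally show ?thesis unfolding G_def .
qed

lemma FF_integral:
  assumes "H \<ge> 2"
  shows "integral\<^sup>L (FF H n) (\<lambda>p. p 0 * p 1 * p 2) = (1 - 1 / (real n + 2)) / 4"
proof -
  have "integral\<^sup>L (FF H n) (\<lambda>p. p 0 * p 1 * p 2) =
      integral\<^sup>L (QQ n) (\<lambda>z. ww H z 0 * ww H z 1 * ww H z 2)"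
    unfolding FF_def by (rule integral_distr[OF ww_meas prod_meas[OF assms]])
  also have "(\<lambda>z. ww H z 0 * ww H z 1 * ww H z 2) = indicator {((True, True), False)}"
  proof
    fix z :: "(bool \<times> bool) \<times> bool"
    obtain x y c where z: "z = ((x, y), c)" by (metis prod.collapse)
    show "ww H z 0 * ww H z 1 * ww H z 2 = indicator {((True, True), False)} z"
      using assms by (cases x; cases y; cases c) (auto simp: z ww_def vv_def)
  qed
  also have "integral\<^sup>L (QQ n) (indicator {((True, True), False)}) = pmf (QQ n) ((True, True), False)"
    by (simp add: measure_pmf_single)
  also have "\<dots> = (1 - 1 / (real n + 2)) / 4"
    by (simp add: QQ_def pmf_pair)
  finally show ?thesis .
qed

lemma FF_inj: "H \<ge> 2 \<Longrightarrow> FF H n = FF H m \<Longrightarrow> n = m"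
proof -
  assume a: "H \<ge> 2" "FF H n = FF H m"
  have "(1 - 1 / (real n + 2)) / 4 = (1 - 1 / (real m + 2)) / 4"
    using FF_integral[OF a(1), of n] FF_integral[OF a(1), of m] a(2) by simp
  then have "1 / (real n + 2) = 1 / (real m + 2)" by simp
  then have "real n + 2 = real m + 2" by (simp add: divide_simps)
  then show "n = m" by simp
qed

lemma adm_finite: "finite {a. admissible H \<kappa> \<eta> a}"
proof (rule finite_subset)
  show "{a. admissible H \<kappa> \<eta> a} \<subseteq> insert (\<lambda>_. 0) ((\<lambda>(b, s). bid_vec \<kappa> \<eta> b s) ` ({..H} \<times> {..H}))"
    unfolding admissible_def by force
qed auto

theorem proposition2:
  fixes H :: nat and \<kappa> \<eta> :: real
    and \<rho> :: "real measure \<Rightarrow> real"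
    and sel :: "((nat \<Rightarrow> real) \<Rightarrow> real) \<Rightarrow> (nat \<Rightarrow> real)"
  assumes "H \<ge> 2" and "\<kappa> > 0" and "0 < \<eta>" and "\<eta> \<le> 1"
    and sel_adm: "\<And>g. admissible H \<kappa> \<eta> (sel g)"
    and sel_max: "\<And>g a. admissible H \<kappa> \<eta> a \<Longrightarrow> g a \<le> g (sel g)"
  shows "\<exists>F1 F2. F1 \<in> price_dists H \<and> F2 \<in> price_dists H \<and> F1 \<noteq> F2 \<and>
           (\<forall>a. admissible H \<kappa> \<eta> a \<longrightarrow>
                 \<rho> (revenue_dist H F1 a) = \<rho> (revenue_dist H F2 a)) \<and>
           opt_bid H \<rho> sel F1 = opt_bid H \<rho> sel F2 \<and>
           \<not> strictly_proper_on (price_dists H) (battery_score H \<rho> sel)"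
proof -
  define f where "f = (\<lambda>n. opt_bid H \<rho> sel (FF H n))"
  have "range f \<subseteq> {a. admissible H \<kappa> \<eta> a}"
    using sel_adm by (auto simp: f_def opt_bid_def)
  then have "finite (range f)" using adm_finite finite_subset by blast
  then have "\<not> inj f" using finite_imageD infinite_UNIV_nat by blast
  then obtain n m where nm: "n \<noteq> m" "f n = f m" unfolding inj_def by blast
  have ne: "FF H n \<noteq> FF H m" using FF_inj[OF assms(1)] nm(1) by blast
  have sc: "battery_score H \<rho> sel (FF H m) = battery_score H \<rho> sel (FF H n)"
    using nm(2) by (auto simp: battery_score_def f_def)
  have nsp: "\<not> strictly_proper_on (price_dists H) (battery_score H \<rho> sel)"
    unfolding strictly_proper_on_def using FF_dist[of H n] FF_dist[of H m] ne sc by metis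
  show ?thesis
    using FF_dist[of H n] FF_dist[of H m] ne nm(2) nsp rev_eq[of H \<kappa> \<eta>]
    by (intro exI[of _ "FF H n"] exI[of _ "FF H m"]) (auto simp: f_def)
qed

end
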